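(* Let $n \ge 0$. Then, in $W$ and in every $W_{n+k}$ ($k\ge 0$): (i) every occurrence of $W_n$ other than the first one is immediately preceded by either $W_n$ or $W_n1$; (ii) every occurrence of $W_n$ other than the last one (in $W$: every occurrence) is immediately followed by either $W_n$ or $1W_n$; (iii) the word $W_nW_nW_nW_n$ does not occur.
   Context: Words are finite strings over $\{0,1\}$. Define $W_0 = 0$ and $W_{m+1} = W_m W_m 1 W_m$ for $m\ge 0$. Since each $W_m$ is an initial segment of $W_{m+1}$, there is a unique infinite word $W = W(0)W(1)W(2)\cdots$ (indexed from position $0$) such that every $W_m$ is an initial segment of $W$. An occurrence of a word $u$ in $v$ is a position where $u$ appears as a contiguous block of $v$. *)

theory Defs
  imports Main
begin

text \<open>Words over {0,1} are represented as lists of naturals with entries 0 and 1.\<close>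

fun Wm :: "nat \<Rightarrow> nat list" where
  "Wm 0 = [0]"
| "Wm (Suc m) = Wm m @ Wm m @ [1] @ Wm m"

definition Winf :: "nat \<Rightarrow> nat" where
  "Winf = (THE w. \<forall>m i. i < length (Wm m) \<longrightarrow> w i = Wm m ! i)"

definition occ :: "nat list \<Rightarrow> nat list \<Rightarrow> nat \<Rightarrow> bool" where
  "occ u v p \<longleftrightarrow> p + length u \<le> length v \<and> take (length u) (drop p v) = u"

definition occ_inf :: "nat list \<Rightarrow> (nat \<Rightarrow> nat) \<Rightarrow> nat \<Rightarrow> bool" where
  "occ_inf u w p \<longleftrightarrow> (\<forall>j < length u. w (p + j) = u ! j)"

end

theory Submission
  imports Defs "HOL-Library.Sublist"
begin


definition f :: "nat \<Rightarrow> nat \<Rightarrow> nat list" where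
  "f n c = (if c = 0 then Wm n else [1])"
definition Sg :: "nat \<Rightarrow> nat list \<Rightarrow> nat list" where
  "Sg n v = concat (map (f n) v)"
definition pos :: "nat \<Rightarrow> nat list \<Rightarrow> nat \<Rightarrow> nat" where
  "pos n v i = length (Sg n (take i v))"

lemma Wm_ne: "Wm n \<noteq> []" by (cases n) auto
lemma Wm_hd: "Wm n ! 0 = 0" by (induction n) (auto simp: nth_append Wm_ne)
lemma Wm_set: "set (Wm n) \<subseteq> {0,1}" by (induction n) auto
lemma Wm_len: "length (Wm n) \<ge> Suc n" by (induction n) auto

lemma Sg_simps[simp]: "Sg n [] = []" "Sg n (c#v) = f n c @ Sg n v" "Sg n (xs@ys) = Sg n xs @ Sg n ys"
  by (auto simp: Sg_def)
lemma f_ne: "f n c \<noteq> []" by (auto simp: f_def Wm_ne)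
lemma f_len: "length (f n c) \<ge> 1" using f_ne by (cases "f n c") auto
lemma f_0: "f n 0 = Wm n" and f_1: "c \<noteq> 0 \<Longrightarrow> f n c = [1]" by (auto simp: f_def)

lemma Sg_set: "set (Sg n v) \<subseteq> {0,1}"
  using Wm_set by (induction v) (auto simp: f_def)

lemma pos_Suc: "i < length v \<Longrightarrow> pos n v (Suc i) = pos n v i + length (f n (v!i))"
  by (simp add: pos_def take_Suc_conv_app_nth)

lemma pos_len: "pos n v (length v) = length (Sg n v)" by (simp add: pos_def)
lemma pos_0[simp]: "pos n v 0 = 0" by (simp add: pos_def)

lemma pos_strict: "i < j \<Longrightarrow> j \<le> length v \<Longrightarrow> pos n v i < pos n v j"
proof (induction j)
  case 0 then show ?case by simp
next
  case (Suc j)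
  have "pos n v (Suc j) = pos n v j + length (f n (v!j))" using Suc by (simp add: pos_Suc)
  moreover have "pos n v i \<le> pos n v j" using Suc by (cases "i = j") auto
  ultimately show ?case using f_len[of n "v!j"] by simp
qed

lemma pos_mono: "i \<le> j \<Longrightarrow> j \<le> length v \<Longrightarrow> pos n v i \<le> pos n v j"
  using pos_strict[of i j v n] by (cases "i = j") auto

lemma pos_inj: "i \<le> length v \<Longrightarrow> j \<le> length v \<Longrightarrow> pos n v i = pos n v j \<Longrightarrow> i = j"
  using pos_strict[of i j v n] pos_strict[of j i v n] by (cases i j rule: linorder_cases) auto

lemma Sg_decomp: "i < length v \<Longrightarrow> Sg n v = Sg n (take i v) @ f n (v!i) @ Sg n (drop (Suc i) v)"
  by (metis Sg_simps(2,3) id_take_nth_drop)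

lemma occ_nth: "occ u w p \<longleftrightarrow> p + length u \<le> length w \<and> (\<forall>j<length u. w!(p+j) = u!j)"
proof
  assume a: "occ u w p"
  then have l: "p + length u \<le> length w" and t: "take (length u) (drop p w) = u" by (auto simp: occ_def)
  have "w!(p+j) = u!j" if "j < length u" for j
  proof -
    have "u!j = take (length u) (drop p w) ! j" using t by simp
    also have "\<dots> = drop p w ! j" using that by simp
    also have "\<dots> = w!(p+j)" using l that by simp
    finally show ?thesis by simp
  qed
  then show "p + length u \<le> length w \<and> (\<forall>j<length u. w!(p+j) = u!j)" using l by blast
next
  assume "p + length u \<le> length w \<and> (\<forall>j<length u. w!(p+j) = u!j)"
  then show "occ u w p" unfolding occ_def by (auto intro!: nth_equalityI)
qed

lemma Sg_at_pos: "i < length v \<Longrightarrow> Sg n v ! pos n v i = (if v!i = 0 then 0 else 1)"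
  using Sg_decomp[of i v n] f_ne[of n "v!i"]
  by (auto simp: pos_def nth_append f_def Wm_hd)

lemma occ_block: "s + length u \<le> length v \<Longrightarrow> (\<forall>j<length u. v!(s+j) = u!j) \<Longrightarrow>
   occ (Sg n u) (Sg n v) (pos n v s)"
proof -
  assume a: "s + length u \<le> length v" "\<forall>j<length u. v!(s+j) = u!j"
  have "take (length u) (drop s v) = u" using a by (auto intro!: nth_equalityI)
  then have v: "v = take s v @ u @ drop (s + length u) v"
    by (metis append_take_drop_id drop_drop add.commute)
  have "Sg n v = Sg n (take s v) @ Sg n u @ Sg n (drop (s + length u) v)"
    by (subst v) simp
  then show ?thesis unfolding occ_def pos_def by simp
qed

lemma occ_split: "occ (u1 @ u2) w p \<Longrightarrow> occ u1 w p \<and> occ u2 w (p + length u1)"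
proof -
  assume "occ (u1 @ u2) w p"
  then have l: "p + length u1 + length u2 \<le> length w"
    and h: "\<And>j. j < length u1 + length u2 \<Longrightarrow> w!(p+j) = (u1@u2)!j"
    by (auto simp: occ_nth)
  have 1: "occ u1 w p" unfolding occ_nth
  proof (intro conjI allI impI)
    fix j assume "j < length u1"
    then show "w!(p+j) = u1!j" using h[of j] by (simp add: nth_append)
  qed (use l in simp)
  have 2: "occ u2 w (p + length u1)" unfolding occ_nth
  proof (intro conjI allI impI)
    fix j assume "j < length u2"
    then have "w!(p+(length u1 + j)) = (u1@u2)!(length u1 + j)" using h[of "length u1 + j"] by simp
    then show "w!(p + length u1 + j) = u2!j" by (simp add: add.assoc)
  qed (use l in simp)
  show ?thesis using 1 2 by blast
qed

lemma Sg_concat: "Sg n (concat xss) = concat (map (Sg n) xss)"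
  by (induction xss) auto

lemma f1: "f 1 c = (if c = 0 then [0,0,1,0] else [1])"
  by (simp add: f_def)

lemma f1s: "f (Suc 0) c = (if c = 0 then [0,0,1,0] else [1])"
  by (simp add: f_def)

lemma f_Suc: "f (Suc n) c = Sg n (if c = 0 then [0,0,1,0] else [1])"
  by (auto simp: f_def f_0 f_1)

lemma Sg_Suc: "Sg (Suc n) v = Sg n (Sg 1 v)"
proof (induction v)
  case (Cons c v) then show ?case by (simp only: Sg_simps f_Suc f1)
qed simp
lemma take_len_app: "take (length xs) (xs @ ys) = xs" by simp

lemma pos_Suc_lvl: "pos (Suc n) v t = pos n (Sg 1 v) (pos 1 v t)"
proof -
  have e: "Sg 1 v = Sg 1 (take t v) @ Sg 1 (drop t v)"
    by (simp only: Sg_simps(3)[symmetric] append_take_drop_id)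
  have t: "take (pos 1 v t) (Sg 1 v) = Sg 1 (take t v)" unfolding pos_def
    by (subst e, rule take_len_app)
  have "pos (Suc n) v t = length (Sg n (Sg 1 (take t v)))"
    unfolding pos_def by (rule arg_cong[OF Sg_Suc])
  also have "\<dots> = pos n (Sg 1 v) (pos 1 v t)" unfolding pos_def[of n] t ..
  finally show ?thesis .
qed

lemma Wm_Sg: "Wm (n + k) = Sg n (Wm k)"
  by (induction k) (auto simp: f_0 f_1)

lemma occ_shift: "length xs \<le> p \<Longrightarrow> occ u (xs @ ys) p \<longleftrightarrow> occ u ys (p - length xs)"
  unfolding occ_def by auto


lemma R1: "occ [0,0,1,0] (Sg 1 v) p \<Longrightarrow> \<exists>t<length v. v!t = 0 \<and> p = pos 1 v t"
proof (induction v arbitrary: p)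
  case Nil then show ?case by (simp add: occ_def)
next
  case (Cons c v)
  show ?case
  proof (cases "c = 0")
    case True
    have W1: "f 1 c = [0,0,1,0]" using True by (simp add: f1 f1s)
    have e: "Sg 1 (c#v) = [0,0,1,0] @ Sg 1 v" using W1 by simp
    consider "p = 0" | "p = 1" | "p = 2" | "p = 3" | "p \<ge> 4" by linarith
    then show ?thesis
    proof cases
      case 1 then show ?thesis using True by (auto intro!: exI[of _ 0])
    next
      case 2 then show ?thesis using Cons.prems e by (simp add: occ_def)
    next
      case 3 then show ?thesis using Cons.prems e by (simp add: occ_def)
    next
      case 4
      then have "take 3 (Sg 1 v) = [0,1,0]" using Cons.prems e by (simp add: occ_def numeral_3_eq_3)
      then show ?thesis
        by (cases v) (auto simp: f1 f1s split: if_splits)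
    next
      case 5
      then have "occ [0,0,1,0] (Sg 1 v) (p - 4)" using Cons.prems e occ_shift[of "[0,0,1,0]" p] by (simp add: eval_nat_numeral)
      then obtain t where "t < length v" "v!t = 0" "p - 4 = pos 1 v t" using Cons.IH by blast
      then show ?thesis using 5 W1 by (auto intro!: exI[of _ "Suc t"] simp: pos_def)
    qed
  next
    case False
    have e: "Sg 1 (c#v) = [1] @ Sg 1 v" using False by (simp add: f_def)
    show ?thesis
    proof (cases "p = 0")
      case True then show ?thesis using Cons.prems e by (simp add: occ_def)
    next
      case F: False
      then have "occ [0,0,1,0] (Sg 1 v) (p - 1)" using Cons.prems e occ_shift[of "[1]" p] by simp
      then obtain t where "t < length v" "v!t = 0" "p - 1 = pos 1 v t" using Cons.IH by blast
      then show ?thesis using F False by (auto intro!: exI[of _ "Suc t"] simp: pos_def f_def)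
    qed
  qed
qed

lemma R_back: "t < length v \<Longrightarrow> v!t = 0 \<Longrightarrow> occ (Wm n) (Sg n v) (pos n v t)"
  using occ_block[of t "[0]" v n] by (simp add: f_0)

lemma next_block: "t < length v \<Longrightarrow> v!t = 0 \<Longrightarrow> t' < length v \<Longrightarrow> pos n v t' = pos n v t + length (Wm n)
   \<Longrightarrow> t' = Suc t"
  using pos_Suc[of t v n] pos_inj[of t' v "Suc t" n] by (simp add: f_0)

lemma f0_len: "length (f 0 c) = 1" by (simp add: f_def)

lemma pos0: "i \<le> length v \<Longrightarrow> pos 0 v i = i"
proof (induction i)
  case (Suc i) then show ?case using pos_Suc[of i v 0] f0_len by simp
qed simp

lemma R: "occ (Wm n) (Sg n v) p \<Longrightarrow> \<exists>t<length v. v!t = 0 \<and> p = pos n v t"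
proof (induction n arbitrary: v p)
  case 0
  have lenv: "length (Sg 0 v) = length v" using pos_len[of 0 v] pos0[of "length v" v] by simp
  from 0 have p: "p < length v" and c: "Sg 0 v ! p = 0" using lenv by (auto simp: occ_nth)
  have "Sg 0 v ! p = (if v!p = 0 then 0 else 1)" using Sg_at_pos[of p v 0] pos0[of p v] p by simp
  then have "v!p = 0" using c by (simp split: if_splits)
  then show ?case using p pos0[of p v] by (auto intro!: exI[of _ p])
next
  case (Suc n)
  define w where "w = Sg 1 v"
  define L where "L = length (Wm n)"
  have "occ (Wm n @ Wm n @ [1] @ Wm n) (Sg n w) p"
    using Suc.prems unfolding w_def Sg_Suc[of n v] Wm.simps(2) .
  then have o1: "occ (Wm n) (Sg n w) p" and o2: "occ (Wm n) (Sg n w) (p + L)"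
    and o3: "occ [1] (Sg n w) (p + L + L)" and o4: "occ (Wm n) (Sg n w) (p + L + L + 1)"
    using occ_split[of "Wm n" "Wm n @ [1] @ Wm n" "Sg n w" p]
      occ_split[of "Wm n" "[1] @ Wm n" "Sg n w" "p + L"]
      occ_split[of "[1]" "Wm n" "Sg n w" "p + L + L"] unfolding L_def by auto
  obtain i where i: "i < length w" "w!i = 0" "p = pos n w i" using Suc.IH[OF o1] by blast
  obtain j where j: "j < length w" "w!j = 0" "pos n w j = p + L" using Suc.IH[OF o2] by metis
  have ji: "j = Suc i" using next_block[of i w j n] i j unfolding L_def by simp
  obtain l where l: "l < length w" "w!l = 0" "pos n w l = p + L + L + 1" using Suc.IH[OF o4] by metis
  have p2: "pos n w (Suc (Suc i)) = p + L + L"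
    using pos_Suc[of "Suc i" w n] pos_Suc[of i w n] i j ji by (simp add: f_0 L_def)
  have i2: "Suc (Suc i) < length w"
  proof (rule ccontr)
    assume "\<not> Suc (Suc i) < length w"
    then have "Suc (Suc i) = length w" using j ji by simp
    then have "pos n w l \<le> pos n w (Suc (Suc i))" using pos_mono[of l "length w" w n] l by simp
    then show False using l p2 by simp
  qed
  have "Sg n w ! (p + L + L) = 1" using o3 by (simp add: occ_nth)
  then have w2: "w!(Suc (Suc i)) \<noteq> 0" using Sg_at_pos[of "Suc (Suc i)" w n] i2 p2 by (simp split: if_splits)
  have "w!(Suc (Suc i)) \<in> {0,1}" using i2 Sg_set[of 1 v] unfolding w_def by (meson nth_mem subsetD)
  then have w2': "w!(Suc (Suc i)) = 1" using w2 by simp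
  have p3: "pos n w (Suc (Suc (Suc i))) = p + L + L + 1"
    using pos_Suc[of "Suc (Suc i)" w n] i2 p2 w2 by (simp add: f_1)
  have li: "l = Suc (Suc (Suc i))" using pos_inj[of l w "Suc (Suc (Suc i))" n] l p3 i2 by simp
  have "occ [0,0,1,0] w i" unfolding occ_nth
  proof (intro conjI allI impI)
    show "i + length [0,0,1,0::nat] \<le> length w" using l li by simp
  next
    fix m :: nat assume "m < length [0,0,1,0::nat]"
    then have "m = 0 \<or> m = 1 \<or> m = 2 \<or> m = 3" by auto
    then show "w!(i+m) = [0,0,1,0]!m" using i j ji w2' l li by (auto simp: numeral_eq_Suc)
  qed
  then obtain t where t: "t < length v" "v!t = 0" "i = pos 1 v t" using R1 unfolding w_def by blast
  have "p = pos (Suc n) v t" using pos_Suc_lvl[of n v t] i t unfolding w_def by simp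
  then show ?case using t by blast
qed

lemma cross: "sublist u (x@y) \<Longrightarrow> sublist u x \<or> sublist u y \<or>
   sublist u (drop (length x - (length u - 1)) x @ take (length u - 1) y)"
proof -
  assume "sublist u (x@y)"
  then consider "sublist u x" | "sublist u y" | u1 u2 where "u = u1 @ u2" "suffix u1 x" "prefix u2 y"
    by (auto simp: sublist_append)
  then show ?thesis
  proof cases
    case 3
    show ?thesis
    proof (cases "u1 = [] \<or> u2 = []")
      case True then show ?thesis using 3 by (auto simp: suffix_def prefix_def)
    next
      case False
      obtain x0 where x0: "x = x0 @ u1" using 3 by (auto simp: suffix_def)
      obtain y0 where y0: "y = u2 @ y0" using 3 by (auto simp: prefix_def)
      define n where "n = length u - 1"
      have n1: "length u1 \<le> n" and n2: "length u2 \<le> n" using False 3 unfolding n_def by (auto simp: length_greater_0_conv[symmetric] simp del: length_greater_0_conv)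
      have "drop (length x - n) x = drop (length x0 + length u1 - n) x0 @ u1"
        using n1 unfolding x0 by simp
      moreover have "take n y = u2 @ take (n - length u2) y0" using n2 unfolding y0 by simp
      ultimately have "drop (length x - n) x @ take n y = drop (length x0 + length u1 - n) x0 @ u @ take (n - length u2) y0"
        using 3 by simp
      then show ?thesis unfolding n_def by (metis sublist_appendI)
    qed
  qed auto
qed

lemma Wm_last: "last (Wm k) = 0"
  by (induction k) (auto simp: Wm_ne)

lemma Wm_props: "prefix [0,0,1] (Wm (Suc k)) \<and> suffix [0,1,0] (Wm (Suc k)) \<and>
   \<not> sublist [1,1] (Wm (Suc k)) \<and> \<not> sublist [0,0,0,0] (Wm (Suc k))"
proof (induction k)
  case 0 then show ?case by (simp add: sublist_code suffix_def)
next
  case (Suc k)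
  define a where "a = Wm (Suc k)"
  have P: "prefix [0,0,1] a" "suffix [0,1,0] a" "\<not> sublist [1,1] a" "\<not> sublist [0,0,0,0] a"
    using Suc unfolding a_def by auto
  obtain b where b: "a = [0,0,1] @ b" using P(1) by (auto simp: prefix_def)
  obtain c where c: "a = c @ [0,1,0]" using P(2) by (auto simp: suffix_def)
  have e: "Wm (Suc (Suc k)) = a @ a @ [1] @ a" unfolding a_def by simp
  have la: "length a \<ge> 4" using b c by (cases b) auto
  have d3: "drop (length a - 3) a = [0,1,0]" using P(2) by (auto simp: suffix_def)
  have d1: "drop (length a - 1) a = [0]" using P(2) by (auto simp: suffix_def)
  have t3: "take 3 a = [0,0,1]" using b by simp
  have t1: "take 1 a = [0]" using b by simp
  have t2: "take (Suc (Suc 0)) a = [0,0]" using b by simp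
  have A1: "\<not> sublist [1,1] ([1] @ a)" using P(3) cross[of "[1,1]" "[1]" a] t1 by (auto simp: sublist_code)
  have A2: "\<not> sublist [1,1] (a @ [1] @ a)" using P(3) A1 cross[of "[1,1]" a "[1] @ a"] d1 t1 by (auto simp: sublist_code)
  have A3: "\<not> sublist [1,1] (a @ a @ [1] @ a)" using P(3) A2 cross[of "[1,1]" a "a @ [1] @ a"] d1 t1 la by (auto simp: sublist_code)
  have B1: "\<not> sublist [0,0,0,0] ([1] @ a)" using P(4) cross[of "[0,0,0,0]" "[1]" a] t3 t2 by (auto simp: sublist_code numeral_3_eq_3 numeral_2_eq_2)
  have B2: "\<not> sublist [0,0,0,0] (a @ [1] @ a)" using P(4) B1 cross[of "[0,0,0,0]" a "[1] @ a"] d3 t3 t2 la by (auto simp: sublist_code numeral_3_eq_3 numeral_2_eq_2)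
  have B3: "\<not> sublist [0,0,0,0] (a @ a @ [1] @ a)" using P(4) B2 cross[of "[0,0,0,0]" a "a @ [1] @ a"] d3 t3 t2 la by (auto simp: sublist_code numeral_3_eq_3 numeral_2_eq_2)
  show ?case unfolding e using A3 B3 P b c by (auto simp: prefix_def suffix_def)
qed

lemma sub_nth: fixes u v :: "nat list" shows "i + length u \<le> length v \<Longrightarrow> (\<forall>j<length u. v!(i+j) = u!j) \<Longrightarrow> sublist u v"
proof -
  assume "i + length u \<le> length v" "\<forall>j<length u. v!(i+j) = u!j"
  then have "occ u v i" by (simp add: occ_nth)
  then have t: "take (length u) (drop i v) = u" by (simp add: occ_def)
  have "v = take i v @ take (length u) (drop i v) @ drop (length u) (drop i v)"
    by (simp only: append_take_drop_id)
  then have "v = take i v @ u @ drop (length u) (drop i v)" using t by simp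
  then show ?thesis unfolding sublist_def by blast
qed

lemma Wm_01: "i < length (Wm k) \<Longrightarrow> Wm k ! i \<noteq> 0 \<Longrightarrow> Wm k ! i = 1"
  using Wm_set[of k] by (meson insertE nth_mem singletonD subsetD)

lemma Wm_no11: "Suc i < length (Wm k) \<Longrightarrow> Wm k ! i = 0 \<or> Wm k ! Suc i = 0"
proof (cases k)
  case 0 then show "Suc i < length (Wm k) \<Longrightarrow> ?thesis" by simp
next
  case (Suc k')
  assume l: "Suc i < length (Wm k)"
  show ?thesis
  proof (rule ccontr)
    assume "\<not> ?thesis"
    then have "Wm k ! i = 1" "Wm k ! Suc i = 1" using Wm_01[of i k] Wm_01[of "Suc i" k] l by auto
    then have "sublist [1,1] (Wm k)" using l by (intro sub_nth[of i]) (auto simp: less_Suc_eq)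
    then show False using Wm_props[of k'] Suc by simp
  qed
qed

lemma Wm_no0000: "i + 3 < length (Wm k) \<Longrightarrow> Wm k ! i = 0 \<Longrightarrow> Wm k ! Suc i = 0 \<Longrightarrow>
   Wm k ! Suc (Suc i) = 0 \<Longrightarrow> Wm k ! Suc (Suc (Suc i)) = 0 \<Longrightarrow> False"
proof (cases k)
  case 0 then show "i + 3 < length (Wm k) \<Longrightarrow> ?thesis" by simp
next
  case (Suc k')
  assume l: "i + 3 < length (Wm k)" and z: "Wm k ! i = 0" "Wm k ! Suc i = 0"
   "Wm k ! Suc (Suc i) = 0" "Wm k ! Suc (Suc (Suc i)) = 0"
  have "\<forall>j<length [0,0,0,0::nat]. Wm k ! (i+j) = [0,0,0,0]!j"
  proof (intro allI impI)
    fix j :: nat assume "j < length [0,0,0,0::nat]"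
    then have "j = 0 \<or> j = 1 \<or> j = 2 \<or> j = 3" by auto
    then show "Wm k ! (i+j) = [0,0,0,0]!j" using z by (auto simp: numeral_eq_Suc)
  qed
  then have "sublist [0,0,0,0] (Wm k)" using l by (intro sub_nth[of i]) auto
  then show False using Wm_props[of k'] Suc by simp
qed

lemma Wm_lastn: "Wm k ! (length (Wm k) - 1) = 0"
  using Wm_last[of k] Wm_ne[of k] by (simp add: last_conv_nth)

lemma F1:
  assumes p: "occ (Wm n) (Wm (n+k)) p" and q: "occ (Wm n) (Wm (n+k)) q" and qp: "q < p"
  shows "(length (Wm n) \<le> p \<and> occ (Wm n) (Wm (n+k)) (p - length (Wm n)))
      \<or> (length (Wm n) + 1 \<le> p \<and> occ (Wm n @ [1]) (Wm (n+k)) (p - length (Wm n) - 1))"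
proof -
  define v where "v = Wm k"
  have W: "Wm (n+k) = Sg n v" unfolding v_def by (rule Wm_Sg)
  obtain t where t: "t < length v" "v!t = 0" "p = pos n v t" using R[of n v p] p W by auto
  obtain s where s: "s < length v" "v!s = 0" "q = pos n v s" using R[of n v q] q W by auto
  have "s < t"
  proof (rule ccontr)
    assume "\<not> s < t" then have "pos n v t \<le> pos n v s" using pos_mono[of t s v n] s by simp
    then show False using qp s t by simp
  qed
  then obtain t1 where t1: "t = Suc t1" by (cases t) auto
  show ?thesis
  proof (cases "v!t1 = 0")
    case True
    have "p = pos n v t1 + length (Wm n)" using pos_Suc[of t1 v n] t t1 True by (simp add: f_0)
    then show ?thesis using R_back[of t1 v n] True t t1 W by simp
  next
    case False
    have "t1 \<noteq> 0"
    proof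
      assume "t1 = 0" then show False using False Wm_hd[of k] unfolding v_def by simp
    qed
    then obtain t2 where t2: "t1 = Suc t2" by (cases t1) auto
    have v2: "v!t2 = 0" using Wm_no11[of t2 k] False t t1 t2 unfolding v_def by auto
    have v1: "v!t1 = 1" using Wm_01[of t1 k] False t t1 unfolding v_def by auto
    have "p = pos n v t2 + length (Wm n) + 1"
      using pos_Suc[of t1 v n] pos_Suc[of t2 v n] t t1 t2 v1 v2 by (simp add: f_0 f_1)
    moreover have "occ (Sg n [0,1]) (Sg n v) (pos n v t2)"
      using t t1 t2 v1 v2 by (intro occ_block) (auto simp: less_Suc_eq)
    moreover have "Sg n [0,1] = Wm n @ [1]" by (simp add: f_0 f_1)
    ultimately show ?thesis using W by simp
  qed
qed

lemma F2:
  assumes p: "occ (Wm n) (Wm (n+k)) p" and q: "occ (Wm n) (Wm (n+k)) q" and qp: "p < q"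
  shows "occ (Wm n) (Wm (n+k)) (p + length (Wm n)) \<or> occ ([1] @ Wm n) (Wm (n+k)) (p + length (Wm n))"
proof -
  define v where "v = Wm k"
  have W: "Wm (n+k) = Sg n v" unfolding v_def by (rule Wm_Sg)
  obtain t where t: "t < length v" "v!t = 0" "p = pos n v t" using R[of n v p] p W by auto
  obtain s where s: "s < length v" "v!s = 0" "q = pos n v s" using R[of n v q] q W by auto
  have "t < s"
  proof (rule ccontr)
    assume "\<not> t < s" then have "pos n v s \<le> pos n v t" using pos_mono[of s t v n] t by simp
    then show False using qp s t by simp
  qed
  then have st: "Suc t < length v" using s by simp
  have ps: "pos n v (Suc t) = p + length (Wm n)" using pos_Suc[of t v n] t by (simp add: f_0)
  show ?thesis
  proof (cases "v!Suc t = 0")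
    case True
    then show ?thesis using R_back[of "Suc t" v n] st ps W by simp
  next
    case False
    have v1: "v!Suc t = 1" using Wm_01[of "Suc t" k] False st unfolding v_def by auto
    have "Suc t \<noteq> length v - 1" using Wm_lastn[of k] False unfolding v_def by auto
    then have st2: "Suc (Suc t) < length v" using st by simp
    have v2: "v!Suc (Suc t) = 0" using Wm_no11[of "Suc t" k] False st2 unfolding v_def by auto
    have "occ (Sg n [1,0]) (Sg n v) (pos n v (Suc t))"
      using st2 v1 v2 by (intro occ_block) (auto simp: less_Suc_eq)
    moreover have "Sg n [1,0] = [1] @ Wm n" by (simp add: f_0 f_1)
    ultimately show ?thesis using W ps by simp
  qed
qed

lemma F3: "\<not> occ (Wm n @ Wm n @ Wm n @ Wm n) (Wm (n+k)) p"
proof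
  assume o: "occ (Wm n @ Wm n @ Wm n @ Wm n) (Wm (n+k)) p"
  define v where "v = Wm k"
  define L where "L = length (Wm n)"
  have W: "Wm (n+k) = Sg n v" unfolding v_def by (rule Wm_Sg)
  have o1: "occ (Wm n) (Sg n v) p" and o2: "occ (Wm n) (Sg n v) (p + L)"
    and o3: "occ (Wm n) (Sg n v) (p + L + L)" and o4: "occ (Wm n) (Sg n v) (p + L + L + L)"
    using o W occ_split[of "Wm n" "Wm n @ Wm n @ Wm n" "Sg n v" p]
      occ_split[of "Wm n" "Wm n @ Wm n" "Sg n v" "p + L"]
      occ_split[of "Wm n" "Wm n" "Sg n v" "p + L + L"] unfolding L_def by auto
  obtain t where t: "t < length v" "v!t = 0" "p = pos n v t" using R[OF o1] by blast
  obtain a where a: "a < length v" "v!a = 0" "pos n v a = p + L" using R[OF o2] by metis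
  have a': "a = Suc t" using next_block[of t v a n] t a unfolding L_def by simp
  obtain b where b: "b < length v" "v!b = 0" "pos n v b = p + L + L" using R[OF o3] by metis
  have b': "b = Suc a" using next_block[of a v b n] a b unfolding L_def by simp
  obtain c where c: "c < length v" "v!c = 0" "pos n v c = p + L + L + L" using R[OF o4] by metis
  have c': "c = Suc b" using next_block[of b v c n] b c unfolding L_def by simp
  show False using Wm_no0000[of t k] t a a' b b' c c' unfolding v_def by simp
qed

lemma Wm_prefix: "m \<le> m' \<Longrightarrow> prefix (Wm m) (Wm m')"
proof (induction m' rule: dec_induct)
  case (step m')
  have "prefix (Wm m') (Wm (Suc m'))" by (simp add: prefix_def)
  then show ?case using step.IH prefix_order.trans by blast
qed simp

lemma Wm_nth_agree: "m \<le> m' \<Longrightarrow> i < length (Wm m) \<Longrightarrow> Wm m' ! i = Wm m ! i"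
  using Wm_prefix[of m m'] by (auto simp: prefix_def nth_append)

lemma Winf_eq: "i < length (Wm m) \<Longrightarrow> Winf i = Wm m ! i"
proof -
  define w0 where "w0 = (\<lambda>i. Wm i ! i)"
  have P: "\<forall>m i. i < length (Wm m) \<longrightarrow> w0 i = Wm m ! i"
  proof (intro allI impI)
    fix m i assume a: "i < length (Wm m)"
    have li: "i < length (Wm i)" using Wm_len[of i] by simp
    show "w0 i = Wm m ! i"
    proof (cases "m \<le> i")
      case True then show ?thesis using Wm_nth_agree[of m i i] a unfolding w0_def by simp
    next
      case False then show ?thesis using Wm_nth_agree[of i m i] li unfolding w0_def by simp
    qed
  qed
  have "Winf = w0" unfolding Winf_def
  proof (rule the_equality)
    show "\<forall>m i. i < length (Wm m) \<longrightarrow> w0 i = Wm m ! i" by (rule P)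
  next
    fix w assume h: "\<forall>m i. i < length (Wm m) \<longrightarrow> w i = Wm m ! i"
    show "w = w0"
    proof
      fix i have "i < length (Wm i)" using Wm_len[of i] by simp
      then show "w i = w0 i" using h unfolding w0_def by simp
    qed
  qed
  then show "i < length (Wm m) \<Longrightarrow> Winf i = Wm m ! i" using P by simp
qed

lemma T1: "occ u (Wm m) p \<Longrightarrow> occ_inf u Winf p"
  unfolding occ_nth occ_inf_def
proof (intro allI impI)
  fix j assume a: "p + length u \<le> length (Wm m) \<and> (\<forall>j<length u. Wm m ! (p + j) = u ! j)" "j < length u"
  then have "Winf (p + j) = Wm m ! (p + j)" using Winf_eq[of "p + j" m] by simp
  then show "Winf (p + j) = u ! j" using a by simp
qed

lemma T2: "occ_inf u Winf p \<Longrightarrow> p + length u \<le> length (Wm m) \<Longrightarrow> occ u (Wm m) p"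
  unfolding occ_nth occ_inf_def
proof (intro conjI allI impI)
  fix j assume a: "\<forall>j<length u. Winf (p + j) = u ! j" "p + length u \<le> length (Wm m)" "j < length u"
  then have "Winf (p + j) = Wm m ! (p + j)" using Winf_eq[of "p + j" m] by simp
  then show "Wm m ! (p + j) = u ! j" using a by simp
qed

lemma occ_pre: "occ u ys p \<Longrightarrow> occ u (ys @ zs) p"
  unfolding occ_nth by (auto simp: nth_append)

lemma occ_post: "occ u ys p \<Longrightarrow> occ u (xs @ ys) (length xs + p)"
  unfolding occ_nth by (auto simp: nth_append add.assoc)

lemma big: "p + c \<le> length (Wm (n + (p + c)))"
  using Wm_len[of "n + (p + c)"] by simp

theorem mainTheorem2:
  fixes n k :: nat
  shows
   "(\<forall>p. occ_inf (Wm n) Winf p \<and> (\<exists>q<p. occ_inf (Wm n) Winf q) \<longrightarrow>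
        (length (Wm n) \<le> p \<and> occ_inf (Wm n) Winf (p - length (Wm n)))
      \<or> (length (Wm n) + 1 \<le> p \<and> occ_inf (Wm n @ [1]) Winf (p - length (Wm n) - 1)))
  \<and> (\<forall>p. occ_inf (Wm n) Winf p \<longrightarrow>
        occ_inf (Wm n) Winf (p + length (Wm n)) \<or> occ_inf ([1] @ Wm n) Winf (p + length (Wm n)))
  \<and> (\<forall>p. \<not> occ_inf (Wm n @ Wm n @ Wm n @ Wm n) Winf p)
  \<and> (\<forall>p. occ (Wm n) (Wm (n + k)) p \<and> (\<exists>q<p. occ (Wm n) (Wm (n + k)) q) \<longrightarrow>
        (length (Wm n) \<le> p \<and> occ (Wm n) (Wm (n + k)) (p - length (Wm n)))
      \<or> (length (Wm n) + 1 \<le> p \<and> occ (Wm n @ [1]) (Wm (n + k)) (p - length (Wm n) - 1)))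
  \<and> (\<forall>p. occ (Wm n) (Wm (n + k)) p \<and> (\<exists>q>p. occ (Wm n) (Wm (n + k)) q) \<longrightarrow>
        occ (Wm n) (Wm (n + k)) (p + length (Wm n)) \<or> occ ([1] @ Wm n) (Wm (n + k)) (p + length (Wm n)))
  \<and> (\<forall>p. \<not> occ (Wm n @ Wm n @ Wm n @ Wm n) (Wm (n + k)) p)"
proof (intro conjI allI impI)
  define L where "L = length (Wm n)"
  fix p
  {
    assume a: "occ_inf (Wm n) Winf p \<and> (\<exists>q<p. occ_inf (Wm n) Winf q)"
    then obtain q where q: "q < p" "occ_inf (Wm n) Winf q" by blast
    define K where "K = p + (4 * L + 2)"
    have lK: "p + 4 * L + 2 \<le> length (Wm (n + K))" using big[of p "4 * L + 2" n] unfolding K_def by simp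
    have op: "occ (Wm n) (Wm (n + K)) p" using a lK by (intro T2) (auto simp: L_def)
    have oq: "occ (Wm n) (Wm (n + K)) q" using q lK by (intro T2) (auto simp: L_def)
    show "(length (Wm n) \<le> p \<and> occ_inf (Wm n) Winf (p - length (Wm n)))
      \<or> (length (Wm n) + 1 \<le> p \<and> occ_inf (Wm n @ [1]) Winf (p - length (Wm n) - 1))"
      using F1[OF op oq q(1)] T1 by blast
  }
  {
    assume a: "occ_inf (Wm n) Winf p"
    define K where "K = p + (4 * L + 2)"
    have lK: "p + 4 * L + 2 \<le> length (Wm (n + K))" using big[of p "4 * L + 2" n] unfolding K_def by simp
    have op: "occ (Wm n) (Wm (n + K)) p" using a lK by (intro T2) (auto simp: L_def)
    have e: "Wm (n + Suc K) = Wm (n + K) @ (Wm (n + K) @ [1] @ Wm (n + K))" by simp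
    have op': "occ (Wm n) (Wm (n + Suc K)) p" using occ_pre[OF op] e by simp
    have oq': "occ (Wm n) (Wm (n + Suc K)) (length (Wm (n + K)) + p)"
      using occ_post[OF occ_pre[OF op, of "[1] @ Wm (n + K)"], of "Wm (n + K)"] e by simp
    have "p < length (Wm (n + K)) + p" using Wm_ne[of "n + K"] by simp
    then show "occ_inf (Wm n) Winf (p + length (Wm n)) \<or> occ_inf ([1] @ Wm n) Winf (p + length (Wm n))"
      using F2[OF op' oq'] T1 by blast
  }
  {
    define K where "K = p + (4 * L + 2)"
    have lK: "p + 4 * L + 2 \<le> length (Wm (n + K))" using big[of p "4 * L + 2" n] unfolding K_def by simp
    show "\<not> occ_inf (Wm n @ Wm n @ Wm n @ Wm n) Winf p"
    proof
      assume "occ_inf (Wm n @ Wm n @ Wm n @ Wm n) Winf p"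
      then have "occ (Wm n @ Wm n @ Wm n @ Wm n) (Wm (n + K)) p" using lK by (intro T2) (auto simp: L_def)
      then show False using F3 by blast
    qed
  }
  {
    assume a: "occ (Wm n) (Wm (n + k)) p \<and> (\<exists>q<p. occ (Wm n) (Wm (n + k)) q)"
    then show "(length (Wm n) \<le> p \<and> occ (Wm n) (Wm (n + k)) (p - length (Wm n)))
      \<or> (length (Wm n) + 1 \<le> p \<and> occ (Wm n @ [1]) (Wm (n + k)) (p - length (Wm n) - 1))"
      using F1 by blast
  }
  {
    assume a: "occ (Wm n) (Wm (n + k)) p \<and> (\<exists>q>p. occ (Wm n) (Wm (n + k)) q)"
    then show "occ (Wm n) (Wm (n + k)) (p + length (Wm n)) \<or> occ ([1] @ Wm n) (Wm (n + k)) (p + length (Wm n))"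
      using F2 by blast
  }
  show "\<not> occ (Wm n @ Wm n @ Wm n @ Wm n) (Wm (n + k)) p" by (rule F3)
qed

end
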